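(* Let $\Gamma_0$ be a directed Eulerian multi-triangulation of a connected closed $2$-dimensional surface $M$ whose underlying graph is $3$-colorable, and fix a proper $3$-coloring of the underlying graph. Then: (1) if there is a directed walk of length $m$ in $\Gamma_0$ from a vertex $v$ to a vertex $w$, then $v$ and $w$ have the same color if and only if $m$ is divisible by $3$; (2) every closed directed walk in $\Gamma_0$ has length divisible by $3$.
   Context: Digraphs are finite, without loops, possibly with multiple directed edges. An Eulerian digraph is a connected digraph in which every vertex has equal indegree and outdegree. A directed Eulerian embedding is a $2$-cell embedding of an Eulerian digraph in a surface such that the boundary of each face is a directed closed walk (equivalently, incoming and outgoing edges alternate in the rotation around each vertex). A multi-triangulation of $M$ is a closed $2$-cell embedding (every face homeomorphic to a closed disk) of a connected finite graph (without loops, multiple edges allowed) in $M$ all of whose faces are triangles. A directed Eulerian multi-triangulation is a directed Eulerian embedding whose underlying graph is a multi-triangulation. The length of a walk is the number of edges traversed, counted with multiplicity. *)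

theory Defs
  imports Main
begin

text \<open>
Digraph: vertex set V, edge set E (multi-edges allowed since edges are abstract),
each edge e has tail src e and head dst e.

A 2-cell embedding of a connected graph in a connected closed surface is encoded
combinatorially as a graph-encoded map (generalized map / gem): a finite set F of flags
with three fixed-point-free involutions t0, t1, t2 (t0 and t2 commuting, t0 t2 fixed-point
free) acting transitively on F; vert and edg assign to each flag its vertex and edge.
Vertices correspond to the orbits of the group generated by t1, t2, edges to the orbits
of the group generated by t0, t2, faces to the orbits of the group generated by t0, t1.
\<close>

definition gen_rel :: "'f set \<Rightarrow> ('f \<Rightarrow> 'f) list \<Rightarrow> ('f \<times> 'f) set" where
  "gen_rel F ts = {(x, t x) | x t. x \<in> F \<and> t \<in> set ts}"

definition digraph :: "'v set \<Rightarrow> 'e set \<Rightarrow> ('e \<Rightarrow> 'v) \<Rightarrow> ('e \<Rightarrow> 'v) \<Rightarrow> bool" where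
  "digraph V E src dst \<longleftrightarrow> finite V \<and> finite E \<and>
     (\<forall>e\<in>E. src e \<in> V \<and> dst e \<in> V \<and> src e \<noteq> dst e)"

definition eulerian_digraph :: "'v set \<Rightarrow> 'e set \<Rightarrow> ('e \<Rightarrow> 'v) \<Rightarrow> ('e \<Rightarrow> 'v) \<Rightarrow> bool" where
  "eulerian_digraph V E src dst \<longleftrightarrow> digraph V E src dst \<and> V \<noteq> {} \<and>
     (\<forall>v\<in>V. \<forall>w\<in>V. (v, w) \<in> ({(src e, dst e) | e. e \<in> E} \<union> {(dst e, src e) | e. e \<in> E})\<^sup>*) \<and>
     (\<forall>v\<in>V. card {e\<in>E. src e = v} = card {e\<in>E. dst e = v})"

definition gem_embedding ::
  "'v set \<Rightarrow> 'e set \<Rightarrow> ('e \<Rightarrow> 'v) \<Rightarrow> ('e \<Rightarrow> 'v) \<Rightarrow>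
   'f set \<Rightarrow> ('f \<Rightarrow> 'f) \<Rightarrow> ('f \<Rightarrow> 'f) \<Rightarrow> ('f \<Rightarrow> 'f) \<Rightarrow> ('f \<Rightarrow> 'v) \<Rightarrow> ('f \<Rightarrow> 'e) \<Rightarrow> bool" where
  "gem_embedding V E src dst F t0 t1 t2 vert edg \<longleftrightarrow>
     digraph V E src dst \<and> finite F \<and> F \<noteq> {} \<and>
     (\<forall>x\<in>F. t0 x \<in> F \<and> t0 (t0 x) = x \<and> t0 x \<noteq> x) \<and>
     (\<forall>x\<in>F. t1 x \<in> F \<and> t1 (t1 x) = x \<and> t1 x \<noteq> x) \<and>
     (\<forall>x\<in>F. t2 x \<in> F \<and> t2 (t2 x) = x \<and> t2 x \<noteq> x) \<and>
     (\<forall>x\<in>F. t0 (t2 x) = t2 (t0 x) \<and> t0 (t2 x) \<noteq> x) \<and>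
     (\<forall>x\<in>F. \<forall>y\<in>F. (x, y) \<in> (gen_rel F [t0, t1, t2])\<^sup>*) \<and>
     vert ` F = V \<and>
     (\<forall>x\<in>F. \<forall>y\<in>F. vert x = vert y \<longleftrightarrow> (x, y) \<in> (gen_rel F [t1, t2])\<^sup>*) \<and>
     edg ` F = E \<and>
     (\<forall>x\<in>F. \<forall>y\<in>F. edg x = edg y \<longleftrightarrow> y \<in> {x, t0 x, t2 x, t0 (t2 x)}) \<and>
     (\<forall>x\<in>F. (src (edg x) = vert x \<and> dst (edg x) = vert (t0 x)) \<or>
             (src (edg x) = vert (t0 x) \<and> dst (edg x) = vert x))"

text \<open>Multi-triangulation: every face (t0,t1-orbit) is a triangle with three distinct
  vertices, i.e. a closed disk bounded by a 3-cycle.\<close>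
definition gem_multi_triangulation ::
  "'f set \<Rightarrow> ('f \<Rightarrow> 'f) \<Rightarrow> ('f \<Rightarrow> 'f) \<Rightarrow> ('f \<Rightarrow> 'v) \<Rightarrow> bool" where
  "gem_multi_triangulation F t0 t1 vert \<longleftrightarrow>
     (\<forall>x\<in>F. ((t1 \<circ> t0) ^^ 3) x = x \<and>
        vert x \<noteq> vert (t0 x) \<and> vert x \<noteq> vert (t0 (t1 (t0 x))) \<and>
        vert (t0 x) \<noteq> vert (t0 (t1 (t0 x))))"

text \<open>Directed Eulerian embedding: each face boundary is a directed closed walk, i.e.
  consecutive edges along the boundary walk of a face are traversed in the same
  direction relative to their orientation.\<close>
definition directed_faces ::
  "('e \<Rightarrow> 'v) \<Rightarrow> 'f set \<Rightarrow> ('f \<Rightarrow> 'f) \<Rightarrow> ('f \<Rightarrow> 'f) \<Rightarrow> ('f \<Rightarrow> 'v) \<Rightarrow> ('f \<Rightarrow> 'e) \<Rightarrow> bool" where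
  "directed_faces src F t0 t1 vert edg \<longleftrightarrow>
     (\<forall>x\<in>F. (src (edg x) = vert x) \<longleftrightarrow> (src (edg (t1 (t0 x))) = vert (t1 (t0 x))))"

definition directed_eulerian_multi_triangulation ::
  "'v set \<Rightarrow> 'e set \<Rightarrow> ('e \<Rightarrow> 'v) \<Rightarrow> ('e \<Rightarrow> 'v) \<Rightarrow>
   'f set \<Rightarrow> ('f \<Rightarrow> 'f) \<Rightarrow> ('f \<Rightarrow> 'f) \<Rightarrow> ('f \<Rightarrow> 'f) \<Rightarrow> ('f \<Rightarrow> 'v) \<Rightarrow> ('f \<Rightarrow> 'e) \<Rightarrow> bool" where
  "directed_eulerian_multi_triangulation V E src dst F t0 t1 t2 vert edg \<longleftrightarrow>
     eulerian_digraph V E src dst \<and>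
     gem_embedding V E src dst F t0 t1 t2 vert edg \<and>
     gem_multi_triangulation F t0 t1 vert \<and>
     directed_faces src F t0 t1 vert edg"

definition proper_3_coloring :: "'v set \<Rightarrow> 'e set \<Rightarrow> ('e \<Rightarrow> 'v) \<Rightarrow> ('e \<Rightarrow> 'v) \<Rightarrow> ('v \<Rightarrow> nat) \<Rightarrow> bool" where
  "proper_3_coloring V E src dst col \<longleftrightarrow>
     (\<forall>v\<in>V. col v < 3) \<and> (\<forall>e\<in>E. col (src e) \<noteq> col (dst e))"

fun dwalk :: "'v set \<Rightarrow> 'e set \<Rightarrow> ('e \<Rightarrow> 'v) \<Rightarrow> ('e \<Rightarrow> 'v) \<Rightarrow> 'v \<Rightarrow> 'e list \<Rightarrow> 'v \<Rightarrow> bool" where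
  "dwalk V E src dst v [] w \<longleftrightarrow> v \<in> V \<and> v = w"
| "dwalk V E src dst v (e # es) w \<longleftrightarrow> e \<in> E \<and> src e = v \<and> dwalk V E src dst (dst e) es w"

end

theory Submission
  imports Defs
begin

lemma tri_arith:
  fixes a b c :: nat
  assumes "a < 3" "b < 3" "c < 3" "a \<noteq> b" "b \<noteq> c" "c \<noteq> a"
  shows "(int b - int a) mod 3 = (int c - int b) mod 3"
    and "(int a - int b) mod 3 = (int b - int c) mod 3"
  using assms by (auto simp: less_Suc_eq numeral_3_eq_3)

lemma walk_col:
  assumes "\<forall>e\<in>E. (int (col (dst e)) - int (col (src e))) mod 3 = k"
  shows "dwalk V E src dst v es w \<Longrightarrow> (int (col w) - int (col v)) mod 3 = (k * int (length es)) mod 3"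
proof (induction es arbitrary: v)
  case Nil then show ?case by simp
next
  case (Cons e es)
  then have e: "e \<in> E" "src e = v" and r: "dwalk V E src dst (dst e) es w" by auto
  have IH: "(int (col w) - int (col (dst e))) mod 3 = (k * int (length es)) mod 3"
    using Cons.IH r by blast
  have s: "(int (col (dst e)) - int (col v)) mod 3 = k" using assms e by auto
  have "(int (col w) - int (col v)) mod 3 =
        ((int (col w) - int (col (dst e))) + (int (col (dst e)) - int (col v))) mod 3" by simp
  also have "\<dots> = ((int (col w) - int (col (dst e))) mod 3 + (int (col (dst e)) - int (col v)) mod 3) mod 3"
    by (simp add: mod_add_eq)
  also have "\<dots> = ((k * int (length es)) mod 3 + k mod 3) mod 3" using IH s by simp
  also have "\<dots> = (k * int (length es) + k) mod 3" by (simp add: mod_add_eq)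
  also have "\<dots> = (k * int (length (e # es))) mod 3" by (simp add: algebra_simps)
  finally show ?case .
qed

lemma dwalk_V: "dwalk V E src dst v es w \<Longrightarrow> digraph V E src dst \<Longrightarrow> v \<in> V \<and> w \<in> V"
  by (induction es arbitrary: v) (auto simp: digraph_def)

theorem lemma1:
  fixes V :: "'v set" and E :: "'e set" and src dst :: "'e \<Rightarrow> 'v"
    and F :: "'f set" and t0 t1 t2 :: "'f \<Rightarrow> 'f" and vert :: "'f \<Rightarrow> 'v" and edg :: "'f \<Rightarrow> 'e"
    and col :: "'v \<Rightarrow> nat"
  assumes "directed_eulerian_multi_triangulation V E src dst F t0 t1 t2 vert edg"
    and "proper_3_coloring V E src dst col"
  shows "(\<forall>v w es. dwalk V E src dst v es w \<longrightarrow> (col v = col w \<longleftrightarrow> 3 dvd length es)) \<and>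
         (\<forall>v es. dwalk V E src dst v es v \<longrightarrow> 3 dvd length es)"
proof -
  define s where "s e = (int (col (dst e)) - int (col (src e))) mod 3" for e
  have G: "gem_embedding V E src dst F t0 t1 t2 vert edg" and MT: "gem_multi_triangulation F t0 t1 vert"
    and DF: "directed_faces src F t0 t1 vert edg" and EU: "eulerian_digraph V E src dst"
    using assms(1) unfolding directed_eulerian_multi_triangulation_def by auto
  note Gd = G[unfolded gem_embedding_def]
  have dg: "digraph V E src dst" using Gd by blast
  have colr: "\<forall>v\<in>V. col v < 3" "\<forall>e\<in>E. col (src e) \<noteq> col (dst e)"
    using assms(2) unfolding proper_3_coloring_def by auto
  have t0F: "\<And>x. x \<in> F \<Longrightarrow> t0 x \<in> F" and t1F: "\<And>x. x \<in> F \<Longrightarrow> t1 x \<in> F"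
    and t2F: "\<And>x. x \<in> F \<Longrightarrow> t2 x \<in> F" and t1i: "\<And>x. x \<in> F \<Longrightarrow> t1 (t1 x) = x"
    using Gd by auto
  have edgE: "\<And>x. x \<in> F \<Longrightarrow> edg x \<in> E" using Gd by blast
  have vertV: "\<And>x. x \<in> F \<Longrightarrow> vert x \<in> V" using Gd by blast
  have edgeq: "\<And>x y. x \<in> F \<Longrightarrow> y \<in> F \<Longrightarrow> edg x = edg y \<longleftrightarrow> y \<in> {x, t0 x, t2 x, t0 (t2 x)}"
    using Gd by blast
  have ends: "\<And>x. x \<in> F \<Longrightarrow> (src (edg x) = vert x \<and> dst (edg x) = vert (t0 x)) \<or>
             (src (edg x) = vert (t0 x) \<and> dst (edg x) = vert x)" using Gd by blast
  have vt1: "\<And>x. x \<in> F \<Longrightarrow> vert (t1 x) = vert x"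
  proof -
    fix x assume x: "x \<in> F"
    have "(x, t1 x) \<in> gen_rel F [t1, t2]" unfolding gen_rel_def using x by auto
    then have "(x, t1 x) \<in> (gen_rel F [t1, t2])\<^sup>*" by blast
    then show "vert (t1 x) = vert x" using Gd x t1F[OF x] by metis
  qed
  have e0: "\<And>x. x \<in> F \<Longrightarrow> edg (t0 x) = edg x" using edgeq t0F by (metis insertI1 insertI2)
  have e2: "\<And>x. x \<in> F \<Longrightarrow> edg (t2 x) = edg x" using edgeq t2F by (metis insertI1 insertI2)
  have face: "\<And>x. x \<in> F \<Longrightarrow> s (edg (t1 (t0 x))) = s (edg x)"
  proof -
    fix x assume x: "x \<in> F"
    define x1 where "x1 = t0 x"
    define y where "y = t1 x1"
    define y1 where "y1 = t0 y"
    define z where "z = t1 y1"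
    define z1 where "z1 = t0 z"
    have F: "x1 \<in> F" "y \<in> F" "y1 \<in> F" "z \<in> F" "z1 \<in> F"
      unfolding x1_def y_def y1_def z_def z1_def using x t0F t1F by auto
    have "((t1 \<circ> t0) ^^ 3) x = x" using MT x unfolding gem_multi_triangulation_def by blast
    then have "t1 z1 = x" by (simp add: numeral_3_eq_3 x1_def y_def y1_def z_def z1_def)
    then have z1x: "z1 = t1 x" using t1i F by metis
    have vy: "vert y = vert x1" unfolding y_def using vt1 F by auto
    have vz: "vert z = vert y1" unfolding z_def using vt1 F by auto
    have vz1: "vert z1 = vert x" using z1x vt1 x by auto
    have dir: "src (edg x) = vert x \<longleftrightarrow> src (edg y) = vert y"
      using DF x unfolding directed_faces_def y_def x1_def by blast
    have ex: "(src (edg x) = vert x \<and> dst (edg x) = vert x1) \<or> (src (edg x) = vert x1 \<and> dst (edg x) = vert x)"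
      using ends x x1_def by blast
    have ey: "(src (edg y) = vert x1 \<and> dst (edg y) = vert y1) \<or> (src (edg y) = vert y1 \<and> dst (edg y) = vert x1)"
      using ends[OF F(2)] vy y1_def by auto
    have ez: "(src (edg z) = vert y1 \<and> dst (edg z) = vert x) \<or> (src (edg z) = vert x \<and> dst (edg z) = vert y1)"
      using ends[OF F(4)] vz vz1 z1_def by auto
    have ab: "col (vert x) \<noteq> col (vert x1)" using colr edgE[OF x] ex by metis
    have bc: "col (vert x1) \<noteq> col (vert y1)" using colr edgE[OF F(2)] ey by metis
    have ca: "col (vert y1) \<noteq> col (vert x)" using colr edgE[OF F(4)] ez by metis
    have lt: "col (vert x) < 3" "col (vert x1) < 3" "col (vert y1) < 3"
      using colr vertV x F by auto
    have "vert x \<noteq> vert x1" using MT x x1_def unfolding gem_multi_triangulation_def by blast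
    then have "s (edg y) = s (edg x)"
      using ex ey dir vy tri_arith[OF lt ab bc ca] unfolding s_def by auto
    then show "s (edg (t1 (t0 x))) = s (edg x)" by (simp add: y_def x1_def)
  qed
  have inv1: "\<And>x. x \<in> F \<Longrightarrow> s (edg (t1 x)) = s (edg x)"
  proof -
    fix x assume x: "x \<in> F"
    have "t0 (t0 x) = x" using Gd x by blast
    then have "s (edg (t1 x)) = s (edg (t0 x))" using face[OF t0F[OF x]] by simp
    then show "s (edg (t1 x)) = s (edg x)" using e0 x by simp
  qed
  have step: "\<And>x y. (x, y) \<in> gen_rel F [t0, t1, t2] \<Longrightarrow> s (edg y) = s (edg x)"
    unfolding gen_rel_def using e0 e2 inv1 by auto
  have conn: "\<And>x y. (x, y) \<in> (gen_rel F [t0, t1, t2])\<^sup>* \<Longrightarrow> s (edg y) = s (edg x)"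
  proof -
    fix x y assume "(x, y) \<in> (gen_rel F [t0, t1, t2])\<^sup>*"
    then show "s (edg y) = s (edg x)"
      by (induction rule: rtrancl_induct) (auto dest: step)
  qed
  obtain x0 where x0: "x0 \<in> F" using Gd by blast
  define k where "k = s (edg x0)"
  have allk: "\<forall>e\<in>E. s e = k"
  proof
    fix e assume "e \<in> E"
    then obtain x where x: "x \<in> F" "e = edg x" using Gd by blast
    have "(x0, x) \<in> (gen_rel F [t0, t1, t2])\<^sup>*" using Gd x x0 by blast
    then show "s e = k" using conn x k_def by simp
  qed
  have k12: "k = 1 \<or> k = 2"
  proof -
    have e: "edg x0 \<in> E" using edgE x0 .
    then have "src (edg x0) \<in> V" "dst (edg x0) \<in> V" using dg unfolding digraph_def by auto
    then have "col (src (edg x0)) < 3" "col (dst (edg x0)) < 3" "col (src (edg x0)) \<noteq> col (dst (edg x0))"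
      using colr e by auto
    then show ?thesis unfolding k_def s_def by (auto simp: less_Suc_eq numeral_3_eq_3)
  qed
  have part1: "\<forall>v w es. dwalk V E src dst v es w \<longrightarrow> (col v = col w \<longleftrightarrow> 3 dvd length es)"
  proof (intro allI impI)
    fix v w es assume W: "dwalk V E src dst v es w"
    have m: "(int (col w) - int (col v)) mod 3 = (k * int (length es)) mod 3"
      using walk_col[of E col dst src k] allk W unfolding s_def by blast
    have vw: "col v < 3" "col w < 3" using dwalk_V[OF W dg] colr by auto
    have "col v = col w \<longleftrightarrow> (int (col w) - int (col v)) mod 3 = 0"
      using vw by (auto simp: less_Suc_eq numeral_3_eq_3)
    also have "\<dots> \<longleftrightarrow> (k * int (length es)) mod 3 = 0" using m by simp
    also have "\<dots> \<longleftrightarrow> 3 dvd length es" using k12 by presburger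
    finally show "col v = col w \<longleftrightarrow> 3 dvd length es" .
  qed
  then show ?thesis by blast
qed

end
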